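(* In the setting of the context, run top-$k$ constrained beam search ($k$-CBS) with beam width $B$, and let $F$ denote either its final candidate set $C_T$ or the subset $F_{(B)}\subseteq C_T$ of the (at most) $B$ pairs of $C_T$ with the largest second coordinate. Let $\mathsf{dist}\in\{\mathsf{Hamming},\mathsf{Levenshtein}\}$, $\varepsilon\ge0$, and define $$\mathrm{LB}_{\varepsilon,\mathsf{dist}}=\sum_{(\mathbf{z}_{\mathrm{pre}}\Vert\mathbf{x},\,\ell)\in F\,:\,\mathbf{x}\in\mathbb{B}^{\mathsf{dist}}_{\varepsilon}(\mathbf{z}_{\mathrm{suf}})}\exp(\ell),\quad \mathrm{covered}(F)=\sum_{(\cdot,\ell)\in F}\exp(\ell),\quad \mathrm{UB}_{\varepsilon,\mathsf{dist}}=\mathrm{LB}_{\varepsilon,\mathsf{dist}}+\bigl(1-\mathrm{covered}(F)\bigr).$$ Then $p^{\mathsf{dist}}_{\mathbf{z},\varepsilon}\le\mathrm{UB}_{\varepsilon,\mathsf{dist}}$.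
   Context: Let $\mathbb{V}$ be a finite vocabulary containing a designated end-of-sequence token EOS. A language model $\theta$ assigns to every finite token sequence (history) $\mathbf{h}$ a probability distribution $\Pr_\theta(\cdot\mid\mathbf{h})$ on $\mathbb{V}$ with $\Pr_\theta(v\mid\mathbf{h})>0$ for all $v$. For an integer $k\ge1$ and a history $\mathbf{h}$, let $S(\mathbf{h})\subseteq\mathbb{V}$ be the set of $k$ tokens with the largest values of $\Pr_\theta(\cdot\mid\mathbf{h})$ (ties broken by a fixed deterministic rule). The top-$k$ decoding distribution is $\Pr_{\theta,\phi}(v\mid\mathbf{h})=\Pr_\theta(v\mid\mathbf{h})/\sum_{u\in S(\mathbf{h})}\Pr_\theta(u\mid\mathbf{h})$ for $v\in S(\mathbf{h})$ and $0$ otherwise. Fix a prefix $\mathbf{z}_{\mathrm{pre}}\in\mathbb{V}^L$ and a target suffix $\mathbf{z}_{\mathrm{suf}}\in\mathbb{V}^T$. For $\mathbf{x}\in\mathbb{V}^T$, $\Pr_{\theta,\phi}(\mathbf{x}\mid\mathbf{z}_{\mathrm{pre}})=\prod_{t=1}^T\Pr_{\theta,\phi}(x_t\mid\mathbf{z}_{\mathrm{pre}}\Vert x_{1:t-1})$ ($\Vert$ is concatenation). For $\mathbf{b},\mathbf{c}\in\mathbb{V}^T$, $\mathsf{Hamming}(\mathbf{b},\mathbf{c})=\#\{t: b_t\ne c_t\}$ and $\mathsf{Levenshtein}(\mathbf{b},\mathbf{c})$ is the minimum number of unit-cost single-token substitutions, insertions and deletions transforming $\mathbf{b}$ into $\mathbf{c}$.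 The $\varepsilon$-ball is $\mathbb{B}^{\mathsf{dist}}_{\varepsilon}(\mathbf{z}_{\mathrm{suf}})=\{\mathbf{v}\in\mathbb{V}^T:\mathsf{dist}(\mathbf{v},\mathbf{z}_{\mathrm{suf}})\le\varepsilon\}$, and $p^{\mathsf{dist}}_{\mathbf{z},\varepsilon}=\sum_{\mathbf{v}\in\mathbb{B}^{\mathsf{dist}}_{\varepsilon}(\mathbf{z}_{\mathrm{suf}})}\Pr_{\theta,\phi}(\mathbf{v}\mid\mathbf{z}_{\mathrm{pre}})$. $k$-CBS with beam width $B$: set $L_0=\{(\mathbf{z}_{\mathrm{pre}},0)\}$. For $t=1,\dots,T$: let $C_t=\{(\mathbf{h}\Vert v,\ \ell+\log\Pr_{\theta,\phi}(v\mid\mathbf{h})):(\mathbf{h},\ell)\in L_{t-1},\ v\in S(\mathbf{h})\}$. If $t=T$, output $C_T$. If $t<T$, delete from $C_t$ every pair whose history ends in EOS, and let $L_t$ be the (at most) $B$ pairs of $C_t$ with the largest second coordinate (deterministic tie-breaking). Every pair in $C_T$ has the form $(\mathbf{z}_{\mathrm{pre}}\Vert\mathbf{x},\ell)$ with $\mathbf{x}\in\mathbb{V}^T$. *)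

theory Defs
  imports Main Complex_Main
begin

definition hamming :: "'v list \<Rightarrow> 'v list \<Rightarrow> nat" where
  "hamming b c = card {t. t < length b \<and> b ! t \<noteq> c ! t}"

definition edit1 :: "'v list \<Rightarrow> 'v list \<Rightarrow> bool" where
  "edit1 xs ys \<longleftrightarrow>
     (\<exists>u w a b. xs = u @ a # w \<and> ys = u @ b # w) \<or>
     (\<exists>u w a. xs = u @ w \<and> ys = u @ a # w) \<or>
     (\<exists>u w a. xs = u @ a # w \<and> ys = u @ w)"

definition levenshtein :: "'v list \<Rightarrow> 'v list \<Rightarrow> nat" where
  "levenshtein b c = (LEAST n. (edit1 ^^ n) b c)"

text \<open>Top-k renormalised distribution; S h is the top-k set at history h.\<close>
definition pphi :: "('v list \<Rightarrow> 'v \<Rightarrow> real) \<Rightarrow> ('v list \<Rightarrow> 'v set) \<Rightarrow> 'v list \<Rightarrow> 'v \<Rightarrow> real" where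
  "pphi \<theta> S h v = (if v \<in> S h then \<theta> h v / (\<Sum>u\<in>S h. \<theta> h u) else 0)"

definition seq_prob :: "('v list \<Rightarrow> 'v \<Rightarrow> real) \<Rightarrow> ('v list \<Rightarrow> 'v set) \<Rightarrow> 'v list \<Rightarrow> 'v list \<Rightarrow> real" where
  "seq_prob \<theta> S zpre x = (\<Prod>t<length x. pphi \<theta> S (zpre @ take t x) (x ! t))"

definition ball_dist :: "('v list \<Rightarrow> 'v list \<Rightarrow> nat) \<Rightarrow> real \<Rightarrow> 'v list \<Rightarrow> 'v list set" where
  "ball_dist dst \<epsilon> zsuf = {v. length v = length zsuf \<and> real (dst v zsuf) \<le> \<epsilon>}"

definition p_ball :: "('v list \<Rightarrow> 'v \<Rightarrow> real) \<Rightarrow> ('v list \<Rightarrow> 'v set) \<Rightarrow> ('v list \<Rightarrow> 'v list \<Rightarrow> nat)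
    \<Rightarrow> real \<Rightarrow> 'v list \<Rightarrow> 'v list \<Rightarrow> real" where
  "p_ball \<theta> S dst \<epsilon> zpre zsuf = (\<Sum>v\<in>ball_dist dst \<epsilon> zsuf. seq_prob \<theta> S zpre v)"

definition cand :: "('v list \<Rightarrow> 'v \<Rightarrow> real) \<Rightarrow> ('v list \<Rightarrow> 'v set)
    \<Rightarrow> ('v list \<times> real) set \<Rightarrow> ('v list \<times> real) set" where
  "cand \<theta> S L = {(h @ [v], l + ln (pphi \<theta> S h v)) | h l v. (h, l) \<in> L \<and> v \<in> S h}"

text \<open>Beams L_n; sel is the (deterministic) top-B selection on the second coordinate.\<close>
fun beam :: "('v list \<Rightarrow> 'v \<Rightarrow> real) \<Rightarrow> ('v list \<Rightarrow> 'v set)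
    \<Rightarrow> (('v list \<times> real) set \<Rightarrow> ('v list \<times> real) set) \<Rightarrow> 'v \<Rightarrow> 'v list \<Rightarrow> nat
    \<Rightarrow> ('v list \<times> real) set" where
  "beam \<theta> S sel eos zpre 0 = {(zpre, 0)}"
| "beam \<theta> S sel eos zpre (Suc n) =
     sel {p \<in> cand \<theta> S (beam \<theta> S sel eos zpre n). last (fst p) \<noteq> eos}"

text \<open>Final candidate set C_T (for T \<ge> 1).\<close>
definition final_cands :: "('v list \<Rightarrow> 'v \<Rightarrow> real) \<Rightarrow> ('v list \<Rightarrow> 'v set)
    \<Rightarrow> (('v list \<times> real) set \<Rightarrow> ('v list \<times> real) set) \<Rightarrow> 'v \<Rightarrow> 'v list \<Rightarrow> nat
    \<Rightarrow> ('v list \<times> real) set" where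
  "final_cands \<theta> S sel eos zpre T = cand \<theta> S (beam \<theta> S sel eos zpre (T - 1))"

definition LB :: "('v list \<times> real) set \<Rightarrow> ('v list \<Rightarrow> 'v list \<Rightarrow> nat) \<Rightarrow> real
    \<Rightarrow> 'v list \<Rightarrow> 'v list \<Rightarrow> real" where
  "LB F dst \<epsilon> zpre zsuf =
     (\<Sum>p\<in>{p\<in>F. \<exists>x. fst p = zpre @ x \<and> x \<in> ball_dist dst \<epsilon> zsuf}. exp (snd p))"

definition covered :: "('v list \<times> real) set \<Rightarrow> real" where
  "covered F = (\<Sum>p\<in>F. exp (snd p))"

definition UB :: "('v list \<times> real) set \<Rightarrow> ('v list \<Rightarrow> 'v list \<Rightarrow> nat) \<Rightarrow> real
    \<Rightarrow> 'v list \<Rightarrow> 'v list \<Rightarrow> real" where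
  "UB F dst \<epsilon> zpre zsuf = LB F dst \<epsilon> zpre zsuf + (1 - covered F)"

end

theory Submission
  imports Defs
begin


lemma pphi_sum:
  fixes \<theta> :: "'v::finite list \<Rightarrow> 'v \<Rightarrow> real"
  assumes pos: "\<And>h v. \<theta> h v > 0" and ne: "S h \<noteq> {}"
  shows "(\<Sum>v\<in>UNIV. pphi \<theta> S h v) = 1"
proof -
  have "(\<Sum>v\<in>UNIV. pphi \<theta> S h v) = (\<Sum>v\<in>UNIV \<inter> S h. \<theta> h v / (\<Sum>u\<in>S h. \<theta> h u))"
    by (subst sum.inter_restrict) (auto simp: pphi_def)
  also have "\<dots> = (\<Sum>v\<in>S h. \<theta> h v) / (\<Sum>u\<in>S h. \<theta> h u)"
    by (simp add: sum_divide_distrib[symmetric])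
  also have "(\<Sum>u\<in>S h. \<theta> h u) > 0" using ne pos by (intro sum_pos) auto
  hence "(\<Sum>v\<in>S h. \<theta> h v) / (\<Sum>u\<in>S h. \<theta> h u) = 1" by simp
  finally show ?thesis .
qed

lemma pphi_nonneg:
  assumes pos: "\<And>h v. \<theta> h v > 0"
  shows "pphi \<theta> S h v \<ge> 0"
proof -
  have "0 \<le> sum (\<theta> h) (S h)" by (rule sum_nonneg) (simp add: less_imp_le pos)
  moreover have "0 \<le> \<theta> h v" by (simp add: less_imp_le pos)
  ultimately show ?thesis unfolding pphi_def by (simp del: sum_divide_distrib)
qed

lemma pphi_pos:
  fixes \<theta> :: "'v::finite list \<Rightarrow> 'v \<Rightarrow> real"
  assumes pos: "\<And>h v. \<theta> h v > 0" and "v \<in> S h"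
  shows "pphi \<theta> S h v > 0"
proof -
  have "(\<Sum>u\<in>S h. \<theta> h u) > 0" using assms by (intro sum_pos) auto
  thus ?thesis using assms(2) pos[of h v] unfolding pphi_def by (simp del: sum_divide_distrib)
qed

lemma seq_prob_snoc:
  "seq_prob \<theta> S zpre (x @ [v]) = seq_prob \<theta> S zpre x * pphi \<theta> S (zpre @ x) v"
  unfolding seq_prob_def by (simp add: prod.lessThan_Suc nth_append)

lemma seq_prob_nonneg:
  assumes pos: "\<And>h v. \<theta> h v > 0"
  shows "seq_prob \<theta> S zpre x \<ge> 0"
  unfolding seq_prob_def using pphi_nonneg[OF pos] by (intro prod_nonneg) auto

lemma lists_Suc:
  "{x::'v list. length x = Suc n} = (\<lambda>(x,v). x @ [v]) ` ({x. length x = n} \<times> UNIV)"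
proof (rule set_eqI, rule iffI)
  fix x :: "'v list" assume "x \<in> {x. length x = Suc n}"
  hence "x = butlast x @ [last x]" "length (butlast x) = n"
    by (auto intro!: append_butlast_last_id[symmetric])
  thus "x \<in> (\<lambda>(x,v). x @ [v]) ` ({x. length x = n} \<times> UNIV)"
    by (metis (mono_tags, lifting) UNIV_I case_prod_conv image_eqI mem_Collect_eq mem_Sigma_iff)
qed auto

lemma fin_lists: "finite {x::'v::finite list. length x = n}"
  using finite_lists_length_eq[of "UNIV::'v set" n] by simp

lemma seq_sum:
  fixes \<theta> :: "'v::finite list \<Rightarrow> 'v \<Rightarrow> real"
  assumes pos: "\<And>h v. \<theta> h v > 0" and ne: "\<And>h. S h \<noteq> {}"
  shows "(\<Sum>x\<in>{x. length x = n}. seq_prob \<theta> S zpre x) = 1"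
proof (induction n)
  case 0
  have "{x::'v list. length x = 0} = {[]}" by auto
  thus ?case by (simp add: seq_prob_def)
next
  case (Suc n)
  have inj: "inj_on (\<lambda>(x,v). x @ [v]) ({x::'v list. length x = n} \<times> UNIV)"
    by (auto simp: inj_on_def)
  have "(\<Sum>x\<in>{x. length x = Suc n}. seq_prob \<theta> S zpre x)
      = (\<Sum>p\<in>{x::'v list. length x = n} \<times> UNIV. seq_prob \<theta> S zpre (fst p @ [snd p]))"
    unfolding lists_Suc by (subst sum.reindex[OF inj]) (auto intro!: sum.cong)
  also have "\<dots> = (\<Sum>x\<in>{x::'v list. length x = n}. \<Sum>v\<in>UNIV. seq_prob \<theta> S zpre x * pphi \<theta> S (zpre @ x) v)"
    by (subst sum.cartesian_product') (simp add: seq_prob_snoc)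
  also have "\<dots> = (\<Sum>x\<in>{x::'v list. length x = n}. seq_prob \<theta> S zpre x)"
    by (simp add: sum_distrib_left[symmetric] pphi_sum[OF pos ne])
  finally show ?case using Suc by simp
qed

definition good :: "('v list \<Rightarrow> 'v \<Rightarrow> real) \<Rightarrow> ('v list \<Rightarrow> 'v set) \<Rightarrow> 'v list \<Rightarrow> nat \<Rightarrow> ('v list \<times> real) set \<Rightarrow> bool" where
  "good \<theta> S zpre n L \<longleftrightarrow> finite L \<and> (\<forall>p\<in>L. \<exists>x. fst p = zpre @ x \<and> length x = n \<and>
      seq_prob \<theta> S zpre x > 0 \<and> snd p = ln (seq_prob \<theta> S zpre x))"

lemma good_sub: "good \<theta> S zpre n L \<Longrightarrow> L' \<subseteq> L \<Longrightarrow> good \<theta> S zpre n L'"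
  unfolding good_def by (meson finite_subset subsetD)

lemma good_cand:
  fixes \<theta> :: "'v::finite list \<Rightarrow> 'v \<Rightarrow> real"
  assumes pos: "\<And>h v. \<theta> h v > 0" and g: "good \<theta> S zpre n L"
  shows "good \<theta> S zpre (Suc n) (cand \<theta> S L)"
  unfolding good_def
proof
  have "cand \<theta> S L \<subseteq> (\<lambda>(p,v). (fst p @ [v], snd p + ln (pphi \<theta> S (fst p) v))) ` (L \<times> UNIV)"
    unfolding cand_def by force
  moreover have "finite (L \<times> (UNIV::'v set))" using g unfolding good_def by simp
  ultimately show "finite (cand \<theta> S L)" by (meson finite_surj)
  show "\<forall>p\<in>cand \<theta> S L. \<exists>x. fst p = zpre @ x \<and> length x = Suc n \<and>
      seq_prob \<theta> S zpre x > 0 \<and> snd p = ln (seq_prob \<theta> S zpre x)"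
  proof
    fix p assume "p \<in> cand \<theta> S L"
    then obtain h l v where p: "p = (h @ [v], l + ln (pphi \<theta> S h v))" "(h,l) \<in> L" "v \<in> S h"
      unfolding cand_def by blast
    then obtain x where x: "h = zpre @ x" "length x = n" "seq_prob \<theta> S zpre x > 0"
      "l = ln (seq_prob \<theta> S zpre x)" using g unfolding good_def by fastforce
    have pp: "pphi \<theta> S h v > 0" using pphi_pos[of \<theta> v S h] pos p(3) by blast
    show "\<exists>x. fst p = zpre @ x \<and> length x = Suc n \<and>
      seq_prob \<theta> S zpre x > 0 \<and> snd p = ln (seq_prob \<theta> S zpre x)"
      by (rule exI[of _ "x @ [v]"]) (use p x pp in \<open>simp add: seq_prob_snoc ln_mult\<close>)
  qed
qed


theorem proposition2:
  fixes \<theta> :: "'v::finite list \<Rightarrow> 'v \<Rightarrow> real"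
    and S :: "'v list \<Rightarrow> 'v set"
    and sel :: "('v list \<times> real) set \<Rightarrow> ('v list \<times> real) set"
    and eos :: 'v and k B T :: nat
    and zpre zsuf :: "'v list" and \<epsilon> :: real
    and dst :: "'v list \<Rightarrow> 'v list \<Rightarrow> nat"
  assumes pos: "\<And>h v. \<theta> h v > 0"
    and norm: "\<And>h. (\<Sum>v\<in>UNIV. \<theta> h v) = 1"
    and k: "k \<ge> 1"
    and S_card: "\<And>h. card (S h) = min k (card (UNIV :: 'v set))"
    and S_top: "\<And>h v u. v \<in> S h \<Longrightarrow> u \<notin> S h \<Longrightarrow> \<theta> h u \<le> \<theta> h v"
    and B: "B \<ge> 1"
    and sel_sub: "\<And>X. finite X \<Longrightarrow> sel X \<subseteq> X"
    and sel_card: "\<And>X. finite X \<Longrightarrow> card (sel X) = min B (card X)"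
    and sel_top: "\<And>X p q. finite X \<Longrightarrow> p \<in> sel X \<Longrightarrow> q \<in> X - sel X \<Longrightarrow> snd q \<le> snd p"
    and T: "T \<ge> 1" "length zsuf = T"
    and eps: "\<epsilon> \<ge> 0"
    and dst_choice: "dst \<in> {hamming, levenshtein}"
    and F: "F \<in> {final_cands \<theta> S sel eos zpre T, sel (final_cands \<theta> S sel eos zpre T)}"
  shows "p_ball \<theta> S dst \<epsilon> zpre zsuf \<le> UB F dst \<epsilon> zpre zsuf"
  proof -
  have cardU: "card (UNIV :: 'v set) \<ge> 1" using finite_UNIV_card_ge_0[where ?'a='v] by simp
  have ne: "\<And>h. S h \<noteq> {}"
  proof
    fix h assume "S h = {}"
    hence "card (S h) = 0" by simp
    thus False using S_card[of h] k cardU by simp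
  qed
  have gb: "good \<theta> S zpre n (beam \<theta> S sel eos zpre n)" for n
  proof (induction n)
    case 0
    show ?case unfolding good_def by (simp add: seq_prob_def)
  next
    case (Suc n)
    have gc: "good \<theta> S zpre (Suc n) (cand \<theta> S (beam \<theta> S sel eos zpre n))"
      by (rule good_cand[OF pos Suc])
    hence g2: "good \<theta> S zpre (Suc n) {p \<in> cand \<theta> S (beam \<theta> S sel eos zpre n). last (fst p) \<noteq> eos}"
      by (rule good_sub) auto
    hence "finite {p \<in> cand \<theta> S (beam \<theta> S sel eos zpre n). last (fst p) \<noteq> eos}"
      unfolding good_def by simp
    from good_sub[OF g2 sel_sub[OF this]] show ?case by simp
  qed
  have gf: "good \<theta> S zpre T (final_cands \<theta> S sel eos zpre T)"
    using good_cand[OF pos gb[of "T - 1"]] T(1) unfolding final_cands_def by simp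
  have gF: "good \<theta> S zpre T F"
  proof -
    have "finite (final_cands \<theta> S sel eos zpre T)" using gf unfolding good_def by simp
    thus ?thesis using F gf good_sub[OF gf sel_sub] by auto
  qed
  define g where "g p = drop (length zpre) (fst p)" for p :: "'v list \<times> real"
  have gp: "\<And>p. p \<in> F \<Longrightarrow> fst p = zpre @ g p \<and> length (g p) = T \<and> exp (snd p) = seq_prob \<theta> S zpre (g p)"
  proof -
    fix p assume "p \<in> F"
    then obtain x where x: "fst p = zpre @ x" "length x = T" "seq_prob \<theta> S zpre x > 0"
      "snd p = ln (seq_prob \<theta> S zpre x)" using gF unfolding good_def by blast
    thus "fst p = zpre @ g p \<and> length (g p) = T \<and> exp (snd p) = seq_prob \<theta> S zpre (g p)"
      unfolding g_def by simp
  qed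
  have finF: "finite F" using gF unfolding good_def by simp
  have inj: "inj_on g F"
  proof (rule inj_onI)
    fix p q assume pq: "p \<in> F" "q \<in> F" "g p = g q"
    hence "fst p = fst q" using gp by metis
    moreover have "snd p = snd q" using gp[OF pq(1)] gp[OF pq(2)] pq(3) by (metis ln_exp)
    ultimately show "p = q" by (simp add: prod_eq_iff)
  qed
  define A where "A = {x::'v list. length x = T}"
  define X where "X = g ` F"
  define Bl where "Bl = ball_dist dst \<epsilon> zsuf"
  define f where "f = seq_prob \<theta> S zpre"
  have finA: "finite A" unfolding A_def by (rule fin_lists)
  have XA: "X \<subseteq> A" unfolding X_def A_def using gp by auto
  have BA: "Bl \<subseteq> A" unfolding Bl_def A_def ball_dist_def using T(2) by auto
  have fnn: "\<And>x. f x \<ge> 0" unfolding f_def by (rule seq_prob_nonneg[OF pos])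
  have sumA: "sum f A = 1" unfolding f_def A_def by (rule seq_sum[OF pos ne])
  have cov: "covered F = sum f X"
  proof -
    have "covered F = (\<Sum>p\<in>F. f (g p))" unfolding covered_def f_def using gp by (auto intro!: sum.cong)
    also have "\<dots> = sum f X" unfolding X_def by (simp add: sum.reindex[OF inj])
    finally show ?thesis .
  qed
  have lb: "LB F dst \<epsilon> zpre zsuf = sum f (X \<inter> Bl)"
  proof -
    have eq: "{p\<in>F. \<exists>x. fst p = zpre @ x \<and> x \<in> ball_dist dst \<epsilon> zsuf} = {p\<in>F. g p \<in> Bl}"
      unfolding Bl_def using gp by fastforce
    have inj2: "inj_on g {p\<in>F. g p \<in> Bl}" using inj by (rule inj_on_subset) auto
    have "LB F dst \<epsilon> zpre zsuf = (\<Sum>p\<in>{p\<in>F. g p \<in> Bl}. f (g p))"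
      unfolding LB_def eq f_def using gp by (auto intro!: sum.cong)
    also have "\<dots> = sum f (g ` {p\<in>F. g p \<in> Bl})" by (simp add: sum.reindex[OF inj2])
    also have "g ` {p\<in>F. g p \<in> Bl} = X \<inter> Bl" unfolding X_def by auto
    finally show ?thesis .
  qed
  have finB: "finite Bl" using finA BA by (rule finite_subset[rotated])
  have "p_ball \<theta> S dst \<epsilon> zpre zsuf = sum f Bl" unfolding p_ball_def Bl_def f_def ..
  also have "\<dots> = sum f (Bl \<inter> X) + sum f (Bl - X)" by (rule sum.Int_Diff[OF finB])
  also have "sum f (Bl - X) \<le> sum f (A - X)"
    using finA BA fnn by (intro sum_mono2) auto
  also have "sum f (A - X) = 1 - sum f X"
    using sum.subset_diff[OF XA finA, of f] sumA by simp
  finally show ?thesis unfolding UB_def lb cov by (simp add: Int_commute)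
qed

end
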